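(* A finite relational structure $\mathcal H$ is strongly $2$-rectangular if and only if it is strongly $2$-balanced.
   Context: For a prime $p$, a relation is $p$-mpp-definable in $\mathcal H$ if it is defined by a formula of the form $\exists^{\equiv p}\mathbf y_1\exists^{\equiv p}\mathbf y_2\cdots\exists^{\equiv p}\mathbf y_s\,\Phi$, where $\Phi$ is a conjunction of atomic formulas using relations of $\mathcal H$ and equality, the $\mathbf y_j$ are (groups of) variables, and $\exists^{\equiv p}\mathbf y\,\Psi(\mathbf x,\mathbf y)$ holds for $\mathbf a$ iff the number of $\mathbf b$ with $\Psi(\mathbf a,\mathbf b)$ true is not divisible by $p$. $\langle\mathcal H\rangle_p$ is the set of all relations $p$-mpp-definable in $\mathcal H$. A binary relation $\mathcal R\subseteq A_1\times A_2$ is rectangular if $(a,c),(a,d),(b,c)\in\mathcal R$ implies $(b,d)\in\mathcal R$. An $n$-ary relation $\mathcal R$ ($n\ge2$) is rectangular if for every nonempty $I\subsetneq[n]$, $\mathcal R$ viewed as a binary relation between $\mathrm{pr}_I\mathcal R$ and $\mathrm{pr}_{[n]\setminus I}\mathcal R$ is rectangular. $\mathcal H$ is strongly $p$-rectangular if every relation in $\langle\mathcal H\rangle_p$ of arity at least 2 is rectangular. A matrix is a rank-1 block matrix if after permuting rows and columns it is block-diagonal (blocks not necessarily square) with every nonzero block of rank at most 1. A ternary relation $\mathcal R\subseteq A_1\times A_2\times A_3$ is $p$-balanced if the matrix $M_{\mathcal R}\in\mathbb Z_p^{A_1\times A_2}$, $M_{\mathcal R}[x,y]=|\{z:(x,y,z)\in\mathcal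 R\}|\bmod p$, is a rank-1 block matrix over $\mathbb Z_p$; a relation of higher arity $n$ is $p$-balanced if every representation of it as a ternary relation $\subseteq H^k\times H^\ell\times H^{n-k-\ell}$ (grouping coordinates) is $p$-balanced. $\mathcal H$ is strongly $p$-balanced if every relation in $\langle\mathcal H\rangle_p$ is $p$-balanced. *)

theory Defs
  imports Main
begin

text \<open>A relational structure is given by its universe U and a set Rels of relations;
  each relation is a pair (n, R) of its arity n and a set R of tuples (lists of length n).\<close>

datatype 'a atom =
    RelAtom nat "'a list set" "nat list"
  | EqAtom nat nat

fun atom_holds :: "'a atom \<Rightarrow> (nat \<Rightarrow> 'a) \<Rightarrow> bool" where
  "atom_holds (RelAtom n R vs) \<sigma> = (map \<sigma> vs \<in> R)"
| "atom_holds (EqAtom v w) \<sigma> = (\<sigma> v = \<sigma> w)"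

fun atom_vars :: "'a atom \<Rightarrow> nat set" where
  "atom_vars (RelAtom n R vs) = set vs"
| "atom_vars (EqAtom v w) = {v, w}"

fun atom_wf :: "(nat \<times> 'a list set) set \<Rightarrow> 'a atom \<Rightarrow> bool" where
  "atom_wf Rels (RelAtom n R vs) = ((n, R) \<in> Rels \<and> length vs = n)"
| "atom_wf Rels (EqAtom v w) = True"

text \<open>Semantics of the formula  Ex^{=p} Y1 Ex^{=p} Y2 ... Ex^{=p} Ys. Phi  under an assignment;
  the quantifier prefix is a list of variable groups, outermost first; Phi is a list of atoms
  (their conjunction).  Ex^{=p} Y. Psi holds iff the number of assignments of the variables of Y
  to elements of U making Psi true is not divisible by p.\<close>

fun mpp_holds :: "nat \<Rightarrow> 'a set \<Rightarrow> nat set list \<Rightarrow> 'a atom list \<Rightarrow> (nat \<Rightarrow> 'a) \<Rightarrow> bool" where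
  "mpp_holds p U [] \<Phi> \<sigma> = (\<forall>at\<in>set \<Phi>. atom_holds at \<sigma>)"
| "mpp_holds p U (Y # Ys) \<Phi> \<sigma> =
     (\<not> p dvd card {\<rho>. (\<forall>v\<in>Y. \<rho> v \<in> U) \<and> (\<forall>v. v \<notin> Y \<longrightarrow> \<rho> v = \<sigma> v) \<and> mpp_holds p U Ys \<Phi> \<rho>})"

definition assign :: "nat list \<Rightarrow> 'a list \<Rightarrow> nat \<Rightarrow> 'a" where
  "assign xs a v = (case map_of (zip xs a) v of Some b \<Rightarrow> b | None \<Rightarrow> undefined)"

definition mpp_wf :: "(nat \<times> 'a list set) set \<Rightarrow> nat list \<Rightarrow> nat set list \<Rightarrow> 'a atom list \<Rightarrow> bool" where
  "mpp_wf Rels xs Ys \<Phi> \<longleftrightarrow>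
     distinct xs \<and> (\<forall>Y\<in>set Ys. finite Y) \<and> set xs \<inter> \<Union>(set Ys) = {} \<and>
     (\<forall>at\<in>set \<Phi>. atom_wf Rels at \<and> atom_vars at \<subseteq> set xs \<union> \<Union>(set Ys))"

definition mpp_rel :: "nat \<Rightarrow> 'a set \<Rightarrow> nat list \<Rightarrow> nat set list \<Rightarrow> 'a atom list \<Rightarrow> 'a list set" where
  "mpp_rel p U xs Ys \<Phi> =
     {a. length a = length xs \<and> set a \<subseteq> U \<and> mpp_holds p U Ys \<Phi> (assign xs a)}"

definition mpp_definable :: "nat \<Rightarrow> 'a set \<Rightarrow> (nat \<times> 'a list set) set \<Rightarrow> nat \<Rightarrow> 'a list set \<Rightarrow> bool" where
  "mpp_definable p U Rels n R \<longleftrightarrow>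
     (\<exists>xs Ys \<Phi>. mpp_wf Rels xs Ys \<Phi> \<and> length xs = n \<and> R = mpp_rel p U xs Ys \<Phi>)"

definition rectangular_bin :: "('b \<times> 'c) set \<Rightarrow> bool" where
  "rectangular_bin B \<longleftrightarrow>
     (\<forall>a b c d. (a, c) \<in> B \<longrightarrow> (a, d) \<in> B \<longrightarrow> (b, c) \<in> B \<longrightarrow> (b, d) \<in> B)"

definition rectangular :: "nat \<Rightarrow> 'a list set \<Rightarrow> bool" where
  "rectangular n R \<longleftrightarrow>
     (\<forall>I. I \<noteq> {} \<longrightarrow> I \<subset> {..<n} \<longrightarrow>
        rectangular_bin {(nths t I, nths t ({..<n} - I)) | t. t \<in> R})"

definition strongly_rectangular :: "nat \<Rightarrow> 'a set \<Rightarrow> (nat \<times> 'a list set) set \<Rightarrow> bool" where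
  "strongly_rectangular p U Rels \<longleftrightarrow>
     (\<forall>n R. mpp_definable p U Rels n R \<longrightarrow> 2 \<le> n \<longrightarrow> rectangular n R)"

text \<open>A matrix over Z_p (entries taken mod p) with rows Rows and columns Cols is a rank-1 block
  matrix: there is a block labelling f of rows and g of columns such that all entries outside the
  diagonal blocks vanish mod p, and every diagonal block is (mod p) an outer product u v^T,
  i.e. has rank at most 1 over Z_p.\<close>
definition rank1_block :: "nat \<Rightarrow> 'r set \<Rightarrow> 'c set \<Rightarrow> ('r \<Rightarrow> 'c \<Rightarrow> int) \<Rightarrow> bool" where
  "rank1_block p Rows Cols M \<longleftrightarrow>
     (\<exists>(f :: 'r \<Rightarrow> nat) (g :: 'c \<Rightarrow> nat).
        (\<forall>x\<in>Rows. \<forall>y\<in>Cols. M x y mod int p \<noteq> 0 \<longrightarrow> f x = g y) \<and>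
        (\<forall>i. \<exists>(u :: 'r \<Rightarrow> int) (v :: 'c \<Rightarrow> int). \<forall>x\<in>Rows. \<forall>y\<in>Cols.
            f x = i \<longrightarrow> g y = i \<longrightarrow> M x y mod int p = (u x * v y) mod int p))"

definition tuples :: "'a set \<Rightarrow> nat \<Rightarrow> 'a list set" where
  "tuples U k = {t. length t = k \<and> set t \<subseteq> U}"

text \<open>n-ary relation viewed as ternary relation in U^k x U^l x U^(n-k-l) (all parts nonempty).\<close>
definition p_balanced :: "nat \<Rightarrow> 'a set \<Rightarrow> nat \<Rightarrow> 'a list set \<Rightarrow> bool" where
  "p_balanced p U n R \<longleftrightarrow>
     (\<forall>k l. 1 \<le> k \<longrightarrow> 1 \<le> l \<longrightarrow> k + l < n \<longrightarrow>
        rank1_block p (tuples U k) (tuples U l)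
          (\<lambda>x y. int (card {z \<in> tuples U (n - k - l). x @ y @ z \<in> R}) mod int p))"

definition strongly_balanced :: "nat \<Rightarrow> 'a set \<Rightarrow> (nat \<times> 'a list set) set \<Rightarrow> bool" where
  "strongly_balanced p U Rels \<longleftrightarrow>
     (\<forall>n R. mpp_definable p U Rels n R \<longrightarrow> p_balanced p U n R)"

end

theory Submission
  imports Defs
begin

lemma assign_None: "v \<notin> set p \<Longrightarrow> assign p a v = undefined"
proof -
  assume v: "v \<notin> set p"
  have "map_of (zip p a) v = None" using v by (auto simp: map_of_eq_None_iff dest: set_zip_leftD)
  then show ?thesis unfolding assign_def by simp
qed

lemma assign_app1: "length p = length a \<Longrightarrow> v \<in> set p \<Longrightarrow> assign (p@q) (a@b) v = assign p a v"
proof -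
  assume l: "length p = length a" and v: "v \<in> set p"
  then obtain w where w: "map_of (zip p a) v = Some w"
    by (metis (no_types, lifting) domD dom_map_of_zip)
  show ?thesis unfolding assign_def using l w by (simp add: map_add_Some_iff)
qed

lemma assign_app2: "length p = length a \<Longrightarrow> v \<notin> set p \<Longrightarrow> assign (p@q) (a@b) v = assign q b v"
proof -
  assume l: "length p = length a" and v: "v \<notin> set p"
  have N: "map_of (zip p a) v = None" using v by (auto simp: map_of_eq_None_iff dest: set_zip_leftD)
  have "map_of (zip (p@q) (a@b)) v = map_of (zip q b) v" using l by (simp add: map_add_def N split: option.splits)
  then show ?thesis unfolding assign_def by simp
qed

lemma map_assign: "distinct p \<Longrightarrow> length a = length p \<Longrightarrow> map (assign p a) p = a"
  by (rule nth_equalityI) (auto simp: assign_def map_of_zip_nth)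

lemma assign_map: "distinct p \<Longrightarrow> v \<in> set p \<Longrightarrow> assign p (map f p) v = f v"
  by (metis in_set_conv_nth length_map map_assign nth_map)

lemma nths_tail: "length t = k + l \<Longrightarrow> nths t ({..<k+l} - {..<k}) = drop k t"
proof -
  assume l: "length t = k + l"
  have t: "t = take k t @ drop k t" by simp
  have 1: "nths (take k t) ({..<k+l} - {..<k}) = []"
    by (simp add: length_nths l flip: length_0_conv)
  have 2: "nths (drop k t) {j. j + length (take k t) \<in> {..<k+l} - {..<k}} = drop k t"
    by (rule nths_all) (use l in auto)
  show ?thesis by (subst t, subst nths_append) (simp only: 1 2, simp)
qed

lemma atom_holds_cong: "(\<And>v. v \<in> atom_vars at \<Longrightarrow> \<sigma> v = \<sigma>' v) \<Longrightarrow> atom_holds at \<sigma> = atom_holds at \<sigma>'"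
proof (cases at)
  case (RelAtom n R vs)
  assume h: "\<And>v. v \<in> atom_vars at \<Longrightarrow> \<sigma> v = \<sigma>' v"
  have m: "map \<sigma> vs = map \<sigma>' vs" using h RelAtom by (simp add: map_eq_conv)
  show ?thesis unfolding RelAtom atom_holds.simps m ..
next
  case (EqAtom v w)
  assume h: "\<And>v. v \<in> atom_vars at \<Longrightarrow> \<sigma> v = \<sigma>' v"
  then show ?thesis using EqAtom by simp
qed

lemma mpp_holds_cong:
  "(\<And>v. v \<in> (\<Union>at\<in>set \<Phi>. atom_vars at) - \<Union>(set Ys) \<Longrightarrow> \<sigma> v = \<sigma>' v) \<Longrightarrow>
   mpp_holds p U Ys \<Phi> \<sigma> = mpp_holds p U Ys \<Phi> \<sigma>'"
proof (induction Ys arbitrary: \<sigma> \<sigma>')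
  case Nil
  have "atom_holds at \<sigma> = atom_holds at \<sigma>'" if "at \<in> set \<Phi>" for at
    by (rule atom_holds_cong, rule Nil.prems) (use that in auto)
  then show ?case by simp
next
  case (Cons Y Ys)
  define A where "A = (\<lambda>\<sigma>. {\<rho>. (\<forall>v\<in>Y. \<rho> v \<in> U) \<and> (\<forall>v. v \<notin> Y \<longrightarrow> \<rho> v = \<sigma> v) \<and> mpp_holds p U Ys \<Phi> \<rho>})"
  define F where "F = (\<lambda>\<rho> v. if v \<in> Y then \<rho> v else \<sigma>' v)"
  define G where "G = (\<lambda>\<rho> v. if v \<in> Y then \<rho> v else \<sigma> v)"
  have agree: "mpp_holds p U Ys \<Phi> \<rho> = mpp_holds p U Ys \<Phi> \<rho>'"
    if "\<forall>v. v \<notin> Y \<longrightarrow> \<rho> v = \<sigma> v" "\<forall>v. v \<notin> Y \<longrightarrow> \<rho>' v = \<sigma>' v" "\<forall>v\<in>Y. \<rho> v = \<rho>' v" for \<rho> \<rho>'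
  proof (rule Cons.IH)
    fix v assume v: "v \<in> (\<Union>at\<in>set \<Phi>. atom_vars at) - \<Union>(set Ys)"
    show "\<rho> v = \<rho>' v"
    proof (cases "v \<in> Y")
      case True then show ?thesis using that by blast
    next
      case False
      then have "\<sigma> v = \<sigma>' v" using v by (intro Cons.prems) auto
      then show ?thesis using that False by simp
    qed
  qed
  have "bij_betw F (A \<sigma>) (A \<sigma>')"
  proof (rule bij_betw_byWitness[where f'=G])
    show "\<forall>a\<in>A \<sigma>. G (F a) = a"
    proof
      fix a assume "a \<in> A \<sigma>"
      then have h: "\<forall>v. v \<notin> Y \<longrightarrow> a v = \<sigma> v" by (simp add: A_def)
      show "G (F a) = a" unfolding F_def G_def by (rule ext) (simp add: h)
    qed
    show "\<forall>a\<in>A \<sigma>'. F (G a) = a"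
    proof
      fix a assume "a \<in> A \<sigma>'"
      then have h: "\<forall>v. v \<notin> Y \<longrightarrow> a v = \<sigma>' v" by (simp add: A_def)
      show "F (G a) = a" unfolding F_def G_def by (rule ext) (simp add: h)
    qed
    show "F ` A \<sigma> \<subseteq> A \<sigma>'"
    proof
      fix x assume "x \<in> F ` A \<sigma>"
      then obtain \<rho> where r: "\<rho> \<in> A \<sigma>" "x = F \<rho>" by blast
      have e: "mpp_holds p U Ys \<Phi> \<rho> = mpp_holds p U Ys \<Phi> (F \<rho>)"
        by (rule agree) (use r in \<open>auto simp: A_def F_def\<close>)
      have m: "mpp_holds p U Ys \<Phi> (F \<rho>)" using r(1) e by (simp add: A_def)
      show "x \<in> A \<sigma>'" unfolding r(2) A_def using m r(1) by (simp add: A_def F_def)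
    qed
    show "G ` A \<sigma>' \<subseteq> A \<sigma>"
    proof
      fix x assume "x \<in> G ` A \<sigma>'"
      then obtain \<rho> where r: "\<rho> \<in> A \<sigma>'" "x = G \<rho>" by blast
      have e: "mpp_holds p U Ys \<Phi> (G \<rho>) = mpp_holds p U Ys \<Phi> \<rho>"
        by (rule agree) (use r in \<open>auto simp: A_def G_def\<close>)
      have m: "mpp_holds p U Ys \<Phi> (G \<rho>)" using r(1) e by (simp add: A_def)
      show "x \<in> A \<sigma>" unfolding r(2) A_def using m r(1) by (simp add: A_def G_def)
    qed
  qed
  then have "card (A \<sigma>) = card (A \<sigma>')" by (rule bij_betw_same_card)
  then show ?case by (simp add: A_def)
qed

lemma mpp_holds_atom:
  "atom_vars at \<inter> \<Union>(set Ys) = {} \<Longrightarrow>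
   mpp_holds p U Ys (at # \<Phi>) \<sigma> = (atom_holds at \<sigma> \<and> mpp_holds p U Ys \<Phi> \<sigma>)"
proof (induction Ys arbitrary: \<sigma>)
  case Nil
  then show ?case by simp
next
  case (Cons Y Ys)
  have eq: "atom_holds at \<rho> = atom_holds at \<sigma>" if "\<forall>v. v \<notin> Y \<longrightarrow> \<rho> v = \<sigma> v" for \<rho>
    by (rule atom_holds_cong) (use that Cons.prems in auto)
  have S: "{\<rho>. (\<forall>v\<in>Y. \<rho> v \<in> U) \<and> (\<forall>v. v \<notin> Y \<longrightarrow> \<rho> v = \<sigma> v) \<and> mpp_holds p U Ys (at # \<Phi>) \<rho>}
      = {\<rho>. (\<forall>v\<in>Y. \<rho> v \<in> U) \<and> (\<forall>v. v \<notin> Y \<longrightarrow> \<rho> v = \<sigma> v) \<and> atom_holds at \<sigma> \<and> mpp_holds p U Ys \<Phi> \<rho>}"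
  proof (rule Collect_cong)
    fix \<rho>
    have ih: "mpp_holds p U Ys (at # \<Phi>) \<rho> = (atom_holds at \<rho> \<and> mpp_holds p U Ys \<Phi> \<rho>)"
      by (rule Cons.IH) (use Cons.prems in auto)
    show "((\<forall>v\<in>Y. \<rho> v \<in> U) \<and> (\<forall>v. v \<notin> Y \<longrightarrow> \<rho> v = \<sigma> v) \<and> mpp_holds p U Ys (at # \<Phi>) \<rho>)
      = ((\<forall>v\<in>Y. \<rho> v \<in> U) \<and> (\<forall>v. v \<notin> Y \<longrightarrow> \<rho> v = \<sigma> v) \<and> atom_holds at \<sigma> \<and> mpp_holds p U Ys \<Phi> \<rho>)"
      unfolding ih using eq[of \<rho>] by blast
  qed
  show ?case unfolding mpp_holds.simps(2) S by (cases "atom_holds at \<sigma>") simp_all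
qed

lemma assign_in_set: "distinct p \<Longrightarrow> length a = length p \<Longrightarrow> v \<in> set p \<Longrightarrow> assign p a v \<in> set a"
proof -
  assume a: "distinct p" "length a = length p" "v \<in> set p"
  have "assign p a v \<in> set (map (assign p a) p)" using a(3) by simp
  then show ?thesis using map_assign[OF a(1,2)] by simp
qed

lemma finite_tuples: "finite U \<Longrightarrow> finite (tuples U k)"
proof -
  assume "finite U"
  then have "finite {xs. set xs \<subseteq> U \<and> length xs = k}" by (rule finite_lists_length_eq)
  then show ?thesis unfolding tuples_def by (simp add: conj_commute)
qed

lemma key_count:
  assumes wf: "mpp_wf Rels xs Ys \<Phi>" and len: "length xs = n" and kl: "m \<le> n"
    and x: "x \<in> tuples U m"
  shows "x \<in> mpp_rel p U (take m xs) (set (drop m xs) # Ys) \<Phi> \<longleftrightarrow>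
         \<not> p dvd card {z \<in> tuples U (n - m). x @ z \<in> mpp_rel p U xs Ys \<Phi>}"
proof -
  define xs1 where "xs1 = take m xs"
  define xs2 where "xs2 = drop m xs"
  have xs: "xs = xs1 @ xs2" by (simp add: xs1_def xs2_def)
  have dist: "distinct xs" using wf by (simp add: mpp_wf_def)
  have l1: "length xs1 = m" "length x = m" using kl len x by (auto simp: xs1_def tuples_def)
  have disj: "set xs1 \<inter> set xs2 = {}" using dist xs by (metis distinct_append)
  define \<sigma> where "\<sigma> = assign xs1 x"
  define Z where "Z = {z \<in> tuples U (n - m). x @ z \<in> mpp_rel p U xs Ys \<Phi>}"
  define A where "A = {\<rho>. (\<forall>v\<in>set xs2. \<rho> v \<in> U) \<and> (\<forall>v. v \<notin> set xs2 \<longrightarrow> \<rho> v = \<sigma> v) \<and> mpp_holds p U Ys \<Phi> \<rho>}"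
  define F where "F = (\<lambda>z. assign xs (x @ z))"
  have lenz: "length (x @ z) = length xs" if "z \<in> tuples U (n - m)" for z
    using that l1 len kl by (simp add: tuples_def)
  have inj: "inj_on F Z"
  proof
    fix z1 z2 assume z: "z1 \<in> Z" "z2 \<in> Z" "F z1 = F z2"
    have t1: "z1 \<in> tuples U (n - m)" "z2 \<in> tuples U (n - m)" using z(1,2) by (simp_all add: Z_def)
    have e1: "map (F z1) xs = x @ z1" unfolding F_def by (rule map_assign[OF dist lenz[OF t1(1)]])
    have e2: "map (F z2) xs = x @ z2" unfolding F_def by (rule map_assign[OF dist lenz[OF t1(2)]])
    have "x @ z1 = x @ z2" using e1 e2 z(3) by metis
    then show "z1 = z2" by simp
  qed
  have FZ: "F ` Z = A"
  proof
    show "F ` Z \<subseteq> A"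
    proof
      fix r assume "r \<in> F ` Z"
      then obtain z where z: "z \<in> Z" "r = F z" by blast
      have zt: "z \<in> tuples U (n - m)" and zR: "x @ z \<in> mpp_rel p U xs Ys \<Phi>" using z by (auto simp: Z_def)
      have "\<forall>v\<in>set xs2. r v \<in> U"
      proof
        fix v assume "v \<in> set xs2"
        then have "r v \<in> set (x @ z)" unfolding z F_def
          by (intro assign_in_set[OF dist lenz[OF zt]]) (simp add: xs)
        then show "r v \<in> U" using zt x by (auto simp: tuples_def)
      qed
      moreover have "\<forall>v. v \<notin> set xs2 \<longrightarrow> r v = \<sigma> v"
      proof (intro allI impI)
        fix v assume v: "v \<notin> set xs2"
        show "r v = \<sigma> v"
        proof (cases "v \<in> set xs1")
          case True
          then show ?thesis unfolding z F_def \<sigma>_def xs using l1 by (simp add: assign_app1)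
        next
          case False
          then have "v \<notin> set xs" using v xs by auto
          then show ?thesis unfolding z F_def \<sigma>_def using False by (simp add: assign_None)
        qed
      qed
      moreover have "mpp_holds p U Ys \<Phi> r" using zR z by (simp add: mpp_rel_def F_def)
      ultimately show "r \<in> A" by (simp add: A_def)
    qed
    show "A \<subseteq> F ` Z"
    proof
      fix r assume r: "r \<in> A"
      define z where "z = map r xs2"
      have d2: "distinct xs2" using dist xs by simp
      have rz: "r = F z"
      proof
        fix v
        show "r v = F z v"
        proof (cases "v \<in> set xs1")
          case True
          then show ?thesis using r disj l1 unfolding A_def F_def \<sigma>_def xs
            by (auto simp: assign_app1)
        next
          case False
          show ?thesis
          proof (cases "v \<in> set xs2")
            case True
            then show ?thesis using False l1 d2 unfolding F_def xs z_def
              by (simp add: assign_app2 assign_map)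
          next
            case False2: False
            then have "v \<notin> set xs" using False xs by auto
            then show ?thesis using r False False2 unfolding A_def F_def \<sigma>_def
              by (simp add: assign_None xs)
          qed
        qed
      qed
      have zt: "z \<in> tuples U (n - m)"
        using r len kl unfolding z_def tuples_def A_def xs2_def by auto
      have "x @ z \<in> mpp_rel p U xs Ys \<Phi>"
        using r rz zt x lenz[OF zt] unfolding mpp_rel_def A_def F_def tuples_def by auto
      then show "r \<in> F ` Z" using rz zt by (auto simp: Z_def)
    qed
  qed
  have "card A = card Z" using FZ inj card_image by fastforce
  moreover have "x \<in> mpp_rel p U xs1 (set xs2 # Ys) \<Phi> \<longleftrightarrow> \<not> p dvd card A"
    using x l1 by (simp add: mpp_rel_def A_def \<sigma>_def tuples_def)
  ultimately show ?thesis by (simp add: xs1_def xs2_def Z_def)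
qed

lemma rect_imp_bal:
  assumes fin: "finite U" and SR: "strongly_rectangular 2 U Rels" and D: "mpp_definable 2 U Rels n R"
    and k: "1 \<le> k" "1 \<le> l" "k + l < n"
  shows "rank1_block 2 (tuples U k) (tuples U l)
           (\<lambda>x y. int (card {z \<in> tuples U (n - k - l). x @ y @ z \<in> R}) mod int 2)"
proof -
  obtain xs Ys \<Phi> where wf: "mpp_wf Rels xs Ys \<Phi>" and len: "length xs = n" and R: "R = mpp_rel 2 U xs Ys \<Phi>"
    using D unfolding mpp_definable_def by blast
  define S where "S = mpp_rel 2 U (take (k+l) xs) (set (drop (k+l) xs) # Ys) \<Phi>"
  have dist: "distinct xs" using wf by (simp add: mpp_wf_def)
  have sx: "set xs = set (take (k+l) xs) \<union> set (drop (k+l) xs)" by (metis append_take_drop_id set_append)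
  have dj: "set (take (k+l) xs) \<inter> set (drop (k+l) xs) = {}"
    using dist by (rule set_take_disj_set_drop_if_distinct) simp
  have wfS: "mpp_wf Rels (take (k+l) xs) (set (drop (k+l) xs) # Ys) \<Phi>"
  proof -
    have w: "distinct xs" "\<forall>Y\<in>set Ys. finite Y" "set xs \<inter> \<Union>(set Ys) = {}"
      "\<forall>at\<in>set \<Phi>. atom_wf Rels at \<and> atom_vars at \<subseteq> set xs \<union> \<Union>(set Ys)"
      using wf unfolding mpp_wf_def by blast+
    have a1: "distinct (take (k+l) xs)" using w(1) by simp
    have a2: "\<forall>Y\<in>set (set (drop (k+l) xs) # Ys). finite Y" using w(2) by simp
    have a3: "set (take (k+l) xs) \<inter> \<Union>(set (set (drop (k+l) xs) # Ys)) = {}"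
      using w(3) dj sx by auto
    have a4: "\<forall>at\<in>set \<Phi>. atom_wf Rels at \<and> atom_vars at \<subseteq> set (take (k+l) xs) \<union> \<Union>(set (set (drop (k+l) xs) # Ys))"
      using w(4) sx by auto
    show ?thesis unfolding mpp_wf_def using a1 a2 a3 a4 by blast
  qed
  have lt: "length (take (k+l) xs) = k+l" using len k by simp
  have "mpp_definable 2 U Rels (k+l) S"
    unfolding mpp_definable_def S_def using wfS lt by blast
  then have rect: "rectangular (k+l) S" using SR k by (simp add: strongly_rectangular_def)
  define P where "P = (\<lambda>x y. x @ y \<in> S)"
  define C where "C = (\<lambda>x y. card {z \<in> tuples U (n - k - l). x @ y @ z \<in> R})"
  have keyP: "P x y \<longleftrightarrow> odd (C x y)" if "x \<in> tuples U k" "y \<in> tuples U l" for x y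
  proof -
    have xy: "x @ y \<in> tuples U (k+l)" using that by (auto simp: tuples_def)
    have "x @ y \<in> S \<longleftrightarrow> \<not> 2 dvd card {z \<in> tuples U (n - (k+l)). (x @ y) @ z \<in> R}"
      unfolding S_def R by (rule key_count[OF wf len _ xy]) (use k in simp)
    then show ?thesis by (simp add: P_def C_def)
  qed
  have rectP: "P b d" if "P a c" "P a d" "P b c" "a \<in> tuples U k" "b \<in> tuples U k"
    "c \<in> tuples U l" "d \<in> tuples U l" for a b c d
  proof -
    define B where "B = {(nths t {..<k}, nths t ({..<k+l} - {..<k})) | t. t \<in> S}"
    have rb: "rectangular_bin B"
    proof -
      have "0 \<in> {..<k}" using k by simp
      then have i1: "{..<k} \<noteq> {}" by blast
      have "k < k + l" using k by simp
      then have i2: "{..<k} \<subset> {..<k+l}" by (simp add: psubset_eq lessThan_subset_iff lessThan_eq_iff)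
      show ?thesis unfolding B_def using rect[unfolded rectangular_def, rule_format, OF i1 i2] .
    qed
    have inB: "(x, y) \<in> B" if "P x y" "x \<in> tuples U k" "y \<in> tuples U l" for x y
    proof -
      have lx: "length x = k" "length (x @ y) = k + l" using that by (auto simp: tuples_def)
      have "nths (x @ y) {..<k} = x" using lx by simp
      moreover have "nths (x @ y) ({..<k+l} - {..<k}) = y" using nths_tail[OF lx(2)] lx by simp
      ultimately show ?thesis using that(1) unfolding B_def P_def by force
    qed
    have "(b, d) \<in> B" using rb inB[OF that(1,4,6)] inB[OF that(2,4,7)] inB[OF that(3,5,6)]
      unfolding rectangular_bin_def by blast
    then obtain t where t: "t \<in> S" "b = nths t {..<k}" "d = nths t ({..<k+l} - {..<k})"
      unfolding B_def by blast
    have lt: "length t = k + l" using t(1) lt by (simp add: S_def mpp_rel_def)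
    have "b = take k t" "d = drop k t" using t(2,3) nths_tail[OF lt] by simp_all
    then have "b @ d = t" by simp
    then show ?thesis using t(1) by (simp add: P_def)
  qed
  define Row where "Row = (\<lambda>x. {y \<in> tuples U l. P x y})"
  have rowEq: "Row x = Row x'" if "P x y" "P x' y" "x \<in> tuples U k" "x' \<in> tuples U k" "y \<in> tuples U l" for x x' y
  proof -
    have "Row x \<subseteq> Row x'" using rectP[of x y _ x'] that unfolding Row_def by blast
    moreover have "Row x' \<subseteq> Row x" using rectP[of x' y _ x] that unfolding Row_def by blast
    ultimately show ?thesis by blast
  qed
  have finP: "finite (Pow (tuples U l))" using finite_tuples[OF fin] by simp
  then obtain h :: "'a list set \<Rightarrow> nat" and N where hinj: "inj_on h (Pow (tuples U l))"
    using finite_imp_inj_to_nat_seg by blast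
  define f where "f = (\<lambda>x. 2 * h (Row x))"
  define x0 where "x0 = (\<lambda>y. SOME x. x \<in> tuples U k \<and> P x y)"
  define g where "g = (\<lambda>y. if \<exists>x\<in>tuples U k. P x y then 2 * h (Row (x0 y)) else 1)"
  have x0P: "x0 y \<in> tuples U k \<and> P (x0 y) y" if "\<exists>x\<in>tuples U k. P x y" for y
    unfolding x0_def by (rule someI_ex) (use that in blast)
  have M: "(int (C x y) mod int 2) mod int 2 = (if P x y then 1 else 0)"
    if "x \<in> tuples U k" "y \<in> tuples U l" for x y
  proof -
    have e: "int (C x y) mod int 2 = int (C x y mod 2)" by (simp add: of_nat_mod)
    show ?thesis
    proof (cases "even (C x y)")
      case True
      then have "C x y mod 2 = 0" by presburger
      then show ?thesis using keyP[OF that] True e by simp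
    next
      case False
      then have "C x y mod 2 = 1" by presburger
      then show ?thesis using keyP[OF that] False e by simp
    qed
  qed
  have c1: "f x = g y" if "x \<in> tuples U k" "y \<in> tuples U l" "P x y" for x y
  proof -
    have ex: "\<exists>x\<in>tuples U k. P x y" using that by blast
    have "Row x = Row (x0 y)" using rowEq[of x y "x0 y"] x0P[OF ex] that by blast
    then show ?thesis using ex by (simp add: f_def g_def)
  qed
  have c2: "P x y" if "x \<in> tuples U k" "y \<in> tuples U l" "f x = g y" for x y
  proof -
    have ex: "\<exists>x\<in>tuples U k. P x y"
    proof (rule ccontr)
      assume "\<not> ?thesis"
      then have "g y = 1" by (simp add: g_def)
      then show False using that(3) unfolding f_def by presburger
    qed
    then have "h (Row x) = h (Row (x0 y))" using that(3) by (simp add: f_def g_def)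
    moreover have "Row x \<in> Pow (tuples U l)" "Row (x0 y) \<in> Pow (tuples U l)" by (auto simp: Row_def)
    ultimately have "Row x = Row (x0 y)" using hinj by (simp add: inj_on_eq_iff)
    moreover have "y \<in> Row (x0 y)" using x0P[OF ex] that by (simp add: Row_def)
    ultimately have "y \<in> Row x" by simp
    then show ?thesis by (simp add: Row_def)
  qed
  have A1: "P x y" if "x \<in> tuples U k" "y \<in> tuples U l"
      "(int (C x y) mod int 2) mod int 2 \<noteq> 0" for x y
    using that(3) M[OF that(1,2)] by (simp split: if_splits)
  have A2: "(int (C x y) mod int 2) mod int 2 = (1 * 1) mod int 2"
    if "x \<in> tuples U k" "y \<in> tuples U l" "f x = g y" for x y
    using M[OF that(1,2)] c2[OF that] by simp
  show ?thesis
    unfolding rank1_block_def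
    apply (rule exI[of _ f], rule exI[of _ g], rule conjI)
     apply (use A1[unfolded C_def] c1 in blast)
    apply (rule allI, rule exI[of _ "\<lambda>_. 1"], rule exI[of _ "\<lambda>_. 1"])
    apply (use A2[unfolded C_def] in auto)
    done
qed

lemma map_assign_app1: "length p = length a \<Longrightarrow> distinct p \<Longrightarrow> map (assign (p @ q) (a @ b)) p = a"
proof -
  assume l: "length p = length a" and d: "distinct p"
  have "map (assign (p @ q) (a @ b)) p = map (assign p a) p"
    by (rule map_cong) (use l in \<open>simp_all add: assign_app1\<close>)
  also have "\<dots> = a" using map_assign[OF d l[symmetric]] .
  finally show ?thesis .
qed

lemma map_assign_app2: "length p = length a \<Longrightarrow> set p \<inter> set q = {} \<Longrightarrow> length q = length b \<Longrightarrow> distinct q \<Longrightarrow>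
  map (assign (p @ q @ r) (a @ b @ c)) q = b"
proof -
  assume l: "length p = length a" and dj: "set p \<inter> set q = {}" and l2: "length q = length b" and d: "distinct q"
  have "map (assign (p @ q @ r) (a @ b @ c)) q = map (assign (q @ r) (b @ c)) q"
  proof (rule map_cong)
    fix x assume "x \<in> set q"
    then have "x \<notin> set p" using dj by blast
    then show "assign (p @ q @ r) (a @ b @ c) x = assign (q @ r) (b @ c) x" by (rule assign_app2[OF l])
  qed simp
  also have "\<dots> = b" using map_assign_app1[OF l2 d] .
  finally show ?thesis .
qed

lemma fresh_nat: "finite (A :: nat set) \<Longrightarrow> Suc (Max A) \<notin> A"
  using Max_ge not_less_eq_eq by blast

lemma bal_imp_rect:
  assumes SB: "strongly_balanced 2 U Rels" and D: "mpp_definable 2 U Rels n R" and n: "2 \<le> n"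
  shows "rectangular n R"
  unfolding rectangular_def
proof (intro allI impI)
  fix I assume I1: "I \<noteq> {}" and I2: "I \<subset> {..<n}"
  define J where "J = {..<n} - I"
  obtain xs Ys \<Phi> where wf: "mpp_wf Rels xs Ys \<Phi>" and len: "length xs = n" and R: "R = mpp_rel 2 U xs Ys \<Phi>"
    using D unfolding mpp_definable_def by blast
  have w: "distinct xs" "\<forall>Y\<in>set Ys. finite Y" "set xs \<inter> \<Union>(set Ys) = {}"
      "\<forall>at\<in>set \<Phi>. atom_wf Rels at \<and> atom_vars at \<subseteq> set xs \<union> \<Union>(set Ys)"
    using wf unfolding mpp_wf_def by blast+
  define xI where "xI = nths xs I"
  define xJ where "xJ = nths xs J"
  define z where "z = Suc (Max (set xs \<union> \<Union>(set Ys)))"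
  have zf: "z \<notin> set xs \<union> \<Union>(set Ys)" unfolding z_def
    by (rule fresh_nat) (use w(2) in auto)
  define x0 where "x0 = xs ! 0"
  have x0: "x0 \<in> set xs" using n len unfolding x0_def by (simp add: nth_mem)
  have IJ: "I \<union> J = {..<n}" "I \<inter> J = {}" using I2 unfolding J_def by auto
  have sxIJ: "set xs = set xI \<union> set xJ"
  proof -
    have "set xI \<union> set xJ = {xs ! i |i. i < length xs \<and> (i \<in> I \<or> i \<in> J)}"
      unfolding xI_def xJ_def set_nths by blast
    also have "\<dots> = {xs ! i |i. i < length xs}" using IJ len by blast
    also have "\<dots> = set xs" by (auto simp: in_set_conv_nth)
    finally show ?thesis by simp
  qed
  have djIJ: "set xI \<inter> set xJ = {}"
  proof -
    have "xs ! i \<noteq> xs ! j" if "i < n" "j < n" "i \<in> I" "j \<in> J" for i j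
      using that IJ w(1) len nth_eq_iff_index_eq by fastforce
    then show ?thesis unfolding xI_def xJ_def set_nths using len by blast
  qed
  define kk where "kk = length xI"
  define ll where "ll = length xJ"
  have kkll: "kk + ll = n"
  proof -
    have "kk = card I" "ll = card J" unfolding kk_def ll_def xI_def xJ_def length_nths len
      using I2 by (auto intro!: arg_cong[where f=card] simp: J_def)
    moreover have "card I + card J = n" using IJ card_Un_disjoint[of I J] finite_subset[OF _ finite_lessThan]
      by (metis card_lessThan finite_Un finite_lessThan)
    ultimately show ?thesis by simp
  qed
  have kk1: "1 \<le> kk"
  proof -
    obtain i where "i \<in> I" using I1 by blast
    then have "xs ! i \<in> set xI" using I2 len unfolding xI_def set_nths by blast
    then show ?thesis unfolding kk_def by (cases xI) auto
  qed
  have ll1: "1 \<le> ll"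
  proof -
    obtain j where "j \<in> J" using I2 unfolding J_def by blast
    then have "xs ! j \<in> set xJ" using len unfolding xJ_def J_def set_nths by blast
    then show ?thesis unfolding ll_def by (cases xJ) auto
  qed
  define xs' where "xs' = xI @ xJ @ [z]"
  define \<Phi>' where "\<Phi>' = EqAtom z x0 # \<Phi>"
  define R' where "R' = mpp_rel 2 U xs' Ys \<Phi>'"
  have dxI: "distinct xI" "distinct xJ" using w(1) by (simp_all add: xI_def xJ_def)
  have wf': "mpp_wf Rels xs' Ys \<Phi>'"
  proof -
    have a1: "distinct xs'" using dxI djIJ zf sxIJ unfolding xs'_def by auto
    have a3: "set xs' \<inter> \<Union>(set Ys) = {}" using w(3) zf sxIJ unfolding xs'_def by auto
    have a4: "\<forall>at\<in>set \<Phi>'. atom_wf Rels at \<and> atom_vars at \<subseteq> set xs' \<union> \<Union>(set Ys)"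
      using w(4) sxIJ x0 unfolding \<Phi>'_def xs'_def by auto
    show ?thesis unfolding mpp_wf_def using a1 a3 a4 w(2) by blast
  qed
  have lxs': "length xs' = n + 1" using kkll by (simp add: xs'_def kk_def ll_def)
  have "mpp_definable 2 U Rels (n + 1) R'"
    unfolding mpp_definable_def R'_def using wf' lxs' by blast
  then have bal: "p_balanced 2 U (n+1) R'" using SB by (simp add: strongly_balanced_def)
  define M where "M = (\<lambda>x y. int (card {w \<in> tuples U 1. x @ y @ w \<in> R'}) mod int 2)"
  have e1: "n + 1 - kk - ll = 1" using kkll by simp
  have kl: "kk + ll < n + 1" using kkll by simp
  have rb: "rank1_block 2 (tuples U kk) (tuples U ll) M"
    using bal[unfolded p_balanced_def, rule_format, OF kk1 ll1 kl] unfolding e1 M_def .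
  have dxs': "distinct xs'" using wf' by (simp add: mpp_wf_def)
  have HC: "mpp_holds 2 U Ys \<Phi> \<sigma>1 = mpp_holds 2 U Ys \<Phi> \<sigma>2" if "\<forall>v\<in>set xs. \<sigma>1 v = \<sigma>2 v" for \<sigma>1 \<sigma>2
  proof (rule mpp_holds_cong)
    fix v assume "v \<in> (\<Union>at\<in>set \<Phi>. atom_vars at) - \<Union>(set Ys)"
    then have "v \<in> set xs" using w(4) by blast
    then show "\<sigma>1 v = \<sigma>2 v" using that by blast
  qed
  have atz: "atom_vars (EqAtom z x0 :: 'a atom) \<inter> \<Union>(set Ys) = {}" using zf x0 w(3) by auto
  have SIG: "map (assign xs' (u @ v @ [w0])) xI = u \<and> map (assign xs' (u @ v @ [w0])) xJ = v \<and>
     (u @ v @ [w0] \<in> R' \<longleftrightarrow> w0 = assign xs' (u @ v @ [w0]) x0 \<and> mpp_holds 2 U Ys \<Phi> (assign xs' (u @ v @ [w0])))"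
    if uv: "u \<in> tuples U kk" "v \<in> tuples U ll" "w0 \<in> U" for u v w0
  proof -
    define \<sigma> where "\<sigma> = assign xs' (u @ v @ [w0])"
    have lu: "length xI = length u" "length xJ = length v" using uv by (auto simp: tuples_def kk_def ll_def)
    have mI: "map \<sigma> xI = u" unfolding \<sigma>_def xs'_def by (rule map_assign_app1[OF lu(1) dxI(1)])
    have mJ: "map \<sigma> xJ = v" unfolding \<sigma>_def xs'_def by (rule map_assign_app2[OF lu(1) djIJ lu(2) dxI(2)])
    have zI: "z \<notin> set xI" "z \<notin> set xJ" using zf sxIJ by auto
    have mz: "\<sigma> z = w0"
    proof -
      have "\<sigma> z = assign (xJ @ [z]) (v @ [w0]) z" unfolding \<sigma>_def xs'_def by (rule assign_app2[OF lu(1) zI(1)])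
      also have "\<dots> = assign [z] [w0] z" by (rule assign_app2[OF lu(2) zI(2)])
      also have "\<dots> = w0" by (simp add: assign_def)
      finally show ?thesis .
    qed
    have "u @ v @ [w0] \<in> R' \<longleftrightarrow> mpp_holds 2 U Ys \<Phi>' \<sigma>"
      using uv lxs' kkll lu unfolding R'_def mpp_rel_def \<sigma>_def tuples_def by (auto simp: kk_def ll_def)
    also have "\<dots> \<longleftrightarrow> \<sigma> z = \<sigma> x0 \<and> mpp_holds 2 U Ys \<Phi> \<sigma>"
      unfolding \<Phi>'_def using mpp_holds_atom[OF atz] by simp
    finally show ?thesis using mI mJ mz unfolding \<sigma>_def by simp
  qed
  have tR: "length t = n \<and> set t \<subseteq> U \<and> mpp_holds 2 U Ys \<Phi> (assign xs t)" if "t \<in> R" for t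
    using that len unfolding R mpp_rel_def by auto
  have nthsI: "nths t I = map (assign xs t) xI \<and> nths t J = map (assign xs t) xJ" if "length t = n" for t
  proof -
    have e: "map (assign xs t) xs = t" using map_assign[OF w(1)] that len by simp
    show ?thesis unfolding xI_def xJ_def by (simp only: nths_map[symmetric] e)
  qed
  have tupI: "nths t I \<in> tuples U kk \<and> nths t J \<in> tuples U ll" if "t \<in> R" for t
  proof -
    have "length t = length xs" "set t \<subseteq> U" using tR[OF that] len by auto
    then have "length (nths t I) = kk" "length (nths t J) = ll"
      unfolding kk_def ll_def xI_def xJ_def length_nths by simp_all
    moreover have "set (nths t I) \<subseteq> U" "set (nths t J) \<subseteq> U"
      using set_nths_subset[of t I] set_nths_subset[of t J] \<open>set t \<subseteq> U\<close> by blast+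
    ultimately show ?thesis unfolding tuples_def by simp
  qed
  have F1: "M (nths t I) (nths t J) = 1" if t: "t \<in> R" for t
  proof -
    define \<sigma>t where "\<sigma>t = assign xs t"
    have t1: "length t = n" "set t \<subseteq> U" "mpp_holds 2 U Ys \<Phi> \<sigma>t" using tR[OF t] unfolding \<sigma>t_def by auto
    have val: "\<sigma>t x0 \<in> U" using assign_in_set[OF w(1) _ x0, of t] t1 len unfolding \<sigma>t_def by auto
    have "{w \<in> tuples U 1. nths t I @ nths t J @ w \<in> R'} = {[\<sigma>t x0]}"
    proof (intro equalityI subsetI)
      fix w assume "w \<in> {w \<in> tuples U 1. nths t I @ nths t J @ w \<in> R'}"
      then have wt: "w \<in> tuples U 1" and wR: "nths t I @ nths t J @ w \<in> R'" by auto
      have lw: "length w = Suc 0" "set w \<subseteq> U" using wt by (auto simp: tuples_def)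
    then obtain w0 where w0: "w = [w0]" "w0 \<in> U" by (auto simp: length_Suc_conv)
      define \<sigma> where "\<sigma> = assign xs' (nths t I @ nths t J @ [w0])"
      note S = SIG[OF tupI[OF t, THEN conjunct1] tupI[OF t, THEN conjunct2] w0(2), folded \<sigma>_def]
      have agree: "\<forall>v\<in>set xs. \<sigma> v = \<sigma>t v"
      proof -
        have "map \<sigma> xI = map \<sigma>t xI" "map \<sigma> xJ = map \<sigma>t xJ" using S nthsI[OF t1(1)] unfolding \<sigma>t_def by auto
        then show ?thesis using sxIJ by (auto simp: map_eq_conv)
      qed
      have "w0 = \<sigma> x0" using S wR w0(1) by simp
      then show "w \<in> {[\<sigma>t x0]}" using agree x0 w0(1) by simp
    next
      fix w assume "w \<in> {[\<sigma>t x0]}"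
      then have w: "w = [\<sigma>t x0]" by simp
      define \<sigma> where "\<sigma> = assign xs' (nths t I @ nths t J @ [\<sigma>t x0])"
      note S = SIG[OF tupI[OF t, THEN conjunct1] tupI[OF t, THEN conjunct2] val, folded \<sigma>_def]
      have agree: "\<forall>v\<in>set xs. \<sigma> v = \<sigma>t v"
      proof -
        have "map \<sigma> xI = map \<sigma>t xI" "map \<sigma> xJ = map \<sigma>t xJ" using S nthsI[OF t1(1)] unfolding \<sigma>t_def by auto
        then show ?thesis using sxIJ by (auto simp: map_eq_conv)
      qed
      have "mpp_holds 2 U Ys \<Phi> \<sigma>" using HC[OF agree] t1(3) by simp
      moreover have "\<sigma>t x0 = \<sigma> x0" using agree x0 by simp
      ultimately have "nths t I @ nths t J @ [\<sigma>t x0] \<in> R'" using S by simp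
      moreover have "w \<in> tuples U 1" using w val by (simp add: tuples_def)
      ultimately show "w \<in> {w \<in> tuples U 1. nths t I @ nths t J @ w \<in> R'}" using w by simp
    qed
    then show ?thesis unfolding M_def by simp
  qed
  have F2: "\<exists>t\<in>R. nths t I = u \<and> nths t J = v"
    if uv: "u \<in> tuples U kk" "v \<in> tuples U ll" and ex: "{w \<in> tuples U 1. u @ v @ w \<in> R'} \<noteq> {}" for u v
  proof -
    obtain w where wt: "w \<in> tuples U 1" and wR: "u @ v @ w \<in> R'" using ex by blast
    have lw: "length w = Suc 0" "set w \<subseteq> U" using wt by (auto simp: tuples_def)
      then obtain w0 where w0: "w = [w0]" "w0 \<in> U" by (auto simp: length_Suc_conv)
    define \<sigma> where "\<sigma> = assign xs' (u @ v @ [w0])"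
    note S = SIG[OF uv w0(2), folded \<sigma>_def]
    define t where "t = map \<sigma> xs"
    have lt: "length t = n" using len by (simp add: t_def)
    have luvw: "length (u @ v @ [w0]) = length xs'" using uv lxs' kkll by (simp add: tuples_def kk_def ll_def)
    have "set t \<subseteq> U"
    proof
      fix y assume "y \<in> set t"
      then obtain x where x: "x \<in> set xs" "y = \<sigma> x" unfolding t_def by auto
      have "x \<in> set xs'" using x(1) sxIJ unfolding xs'_def by auto
      then have "y \<in> set (u @ v @ [w0])" using assign_in_set[OF dxs' luvw] x(2) unfolding \<sigma>_def by blast
      then show "y \<in> U" using uv w0(2) by (auto simp: tuples_def)
    qed
    moreover have "mpp_holds 2 U Ys \<Phi> (assign xs t)"
    proof -
      have "\<forall>y\<in>set xs. assign xs t y = \<sigma> y" unfolding t_def using assign_map[OF w(1)] by blast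
      then have h1: "mpp_holds 2 U Ys \<Phi> (assign xs t) = mpp_holds 2 U Ys \<Phi> \<sigma>" by (rule HC)
      have "mpp_holds 2 U Ys \<Phi> \<sigma>" using S wR w0(1) by simp
      then show ?thesis using h1 by simp
    qed
    ultimately have "t \<in> R" using lt len unfolding R mpp_rel_def by simp
    moreover have "nths t I = u" "nths t J = v" using S unfolding t_def xI_def xJ_def by (simp_all add: nths_map)
    ultimately show ?thesis by blast
  qed
  obtain f :: "'a list \<Rightarrow> nat" and g :: "'a list \<Rightarrow> nat" where fg1: "\<forall>x\<in>tuples U kk. \<forall>y\<in>tuples U ll. M x y mod int 2 \<noteq> 0 \<longrightarrow> f x = g y"
    and fg2: "\<forall>i. \<exists>(u :: 'a list \<Rightarrow> int) (v :: 'a list \<Rightarrow> int). \<forall>x\<in>tuples U kk. \<forall>y\<in>tuples U ll.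
            f x = i \<longrightarrow> g y = i \<longrightarrow> M x y mod int 2 = (u x * v y) mod int 2"
    using rb unfolding rank1_block_def by blast
  show "rectangular_bin {(nths t I, nths t ({..<n} - I)) | t. t \<in> R}"
    unfolding rectangular_bin_def J_def[symmetric]
  proof (intro allI impI)
    fix a b c d
    assume "(a, c) \<in> {(nths t I, nths t J) |t. t \<in> R}" "(a, d) \<in> {(nths t I, nths t J) |t. t \<in> R}"
      "(b, c) \<in> {(nths t I, nths t J) |t. t \<in> R}"
    then obtain t1 t2 t3 where t: "t1 \<in> R" "t2 \<in> R" "t3 \<in> R" "a = nths t1 I" "c = nths t1 J"
      "a = nths t2 I" "d = nths t2 J" "b = nths t3 I" "c = nths t3 J" by blast
    have tup: "a \<in> tuples U kk" "b \<in> tuples U kk" "c \<in> tuples U ll" "d \<in> tuples U ll"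
      using tupI t by auto
    have m1: "M a c = 1" "M a d = 1" "M b c = 1"
      using F1[OF t(1)] F1[OF t(2)] F1[OF t(3)] unfolding t(4,5,7,8) t(6)[symmetric] t(9)[symmetric] by simp_all
    have nz: "M a c mod int 2 \<noteq> 0" "M a d mod int 2 \<noteq> 0" "M b c mod int 2 \<noteq> 0" using m1 by simp_all
    have e1: "f a = g c" "f a = g d" "f b = g c" using fg1 tup nz by blast+
    obtain u v where uv: "\<forall>x\<in>tuples U kk. \<forall>y\<in>tuples U ll.
            f x = f a \<longrightarrow> g y = f a \<longrightarrow> M x y mod int 2 = (u x * v y) mod int 2"
      using fg2 by blast
    have q1: "M a c mod int 2 = (u a * v c) mod int 2" by (rule uv[rule_format, OF tup(1) tup(3) refl e1(1)[symmetric]])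
    have q2: "M a d mod int 2 = (u a * v d) mod int 2" by (rule uv[rule_format, OF tup(1) tup(4) refl e1(2)[symmetric]])
    have q3: "M b c mod int 2 = (u b * v c) mod int 2" by (rule uv[rule_format, OF tup(2) tup(3) trans[OF e1(3) e1(1)[symmetric]] e1(1)[symmetric]])
    have q4: "M b d mod int 2 = (u b * v d) mod int 2" by (rule uv[rule_format, OF tup(2) tup(4) trans[OF e1(3) e1(1)[symmetric]] e1(2)[symmetric]])
    have r1: "(u a * v c) mod 2 = 1" "(u a * v d) mod 2 = 1" "(u b * v c) mod 2 = 1"
      using q1 q2 q3 m1 by simp_all
    have "odd (u a * v c)" "odd (u a * v d)" "odd (u b * v c)"
      using r1 unfolding odd_iff_mod_2_eq_one by simp_all
    then have "odd (u b * v d)" by simp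
    then have "(u b * v d) mod 2 = 1" unfolding odd_iff_mod_2_eq_one .
    then have Mbd: "M b d mod 2 = 1" using q4 by simp
    have "{w \<in> tuples U 1. b @ d @ w \<in> R'} \<noteq> {}"
    proof
      assume e0: "{w \<in> tuples U 1. b @ d @ w \<in> R'} = {}"
      have "M b d = 0" unfolding M_def by (simp only: e0 card.empty) simp
      then show False using Mbd by simp
    qed
    then obtain t where "t \<in> R" "nths t I = b" "nths t J = d" using F2 tup by blast
    then show "(b, d) \<in> {(nths t I, nths t J) |t. t \<in> R}" by blast
  qed
qed

theorem lemma6p3:
  fixes U :: "'a set" and Rels :: "(nat \<times> 'a list set) set"
  assumes "finite U" and "U \<noteq> {}" and "finite Rels"
    and "\<forall>(n, R)\<in>Rels. R \<subseteq> tuples U n"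
  shows "strongly_rectangular 2 U Rels \<longleftrightarrow> strongly_balanced 2 U Rels"
proof
  assume SR: "strongly_rectangular 2 U Rels"
  show "strongly_balanced 2 U Rels"
    unfolding strongly_balanced_def p_balanced_def
    using rect_imp_bal[OF assms(1) SR] by blast
next
  assume SB: "strongly_balanced 2 U Rels"
  show "strongly_rectangular 2 U Rels"
    unfolding strongly_rectangular_def
    using bal_imp_rect[OF SB] by blast
qed

end
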